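(* Let $f\in\mathbb C[x_1,\dots,x_n]$ be nonzero, $\ell\in\mathbb N$ and $\omega\in\mathbb R^n\setminus\{0\}$, and let $\tau=\tau_\omega$. Then $$\mathrm{in}_{(-\omega,\omega)}\Big(\mathrm{Ann}\big(\tfrac1{f^\ell}\big)\Big)\subseteq\mathrm{Ann}\Big(\tfrac1{f_\tau^\ell}\Big).$$
   Context: $D_n$ is the $n$-th Weyl algebra ($\partial_ix_j=x_j\partial_i+\delta_{ij}$); ideals are left ideals. For $\omega\in\mathbb R^n$, the $(-\omega,\omega)$-weight of $x^\alpha\partial^\beta$ is $-\langle\omega,\alpha\rangle+\langle\omega,\beta\rangle$; $\mathrm{in}_{(-\omega,\omega)}(P)$ is the sum of the terms of maximal weight of the normally ordered expression of $P$, and $\mathrm{in}_{(-\omega,\omega)}(I)$ is the left ideal generated by the $\mathrm{in}_{(-\omega,\omega)}(P)$, $P\in I\setminus\{0\}$. For a nonzero rational function $g$, $\mathrm{Ann}(g)=\{P\in D_n:P\bullet g=0\}$ with $x_i\bullet g=x_ig$, $\partial_i\bullet g=\partial g/\partial x_i$. For $f=\sum_\gamma c_\gamma x^\gamma$: $\mathrm{Supp}(f)=\{\gamma:c_\gamma\ne0\}$, $\Gamma(f)$ its convex hull, $\mathrm{ord}_f(\omega)=\min\{\langle\gamma,\omega\rangle:\gamma\in\Gamma(f)\}$, $\tau_\omega=\{u\in\Gamma(f):\langle u,\omega\rangle=\mathrm{ord}_f(\omega)\}$, and for a face $\tau$, $f_\tau=\sum_{\gamma\in\tau\cap\mathrm{Supp}(f)}c_\gamma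 x^\gamma$. $\mathbb N=\{0,1,2,\dots\}$. *)

theory Defs
  imports "HOL-Analysis.Analysis"
begin

text \<open>Multi-indices are functions nat => nat; only indices i < n are relevant.
 A polynomial in C[x_0..x_(n-1)] is its coefficient function (nat => nat) => complex
 with finite support inside multi-indices supported in {0..<n}.
 An element of the Weyl algebra D_n is its normally ordered coefficient function
 (alpha, beta) |-> c_(alpha,beta) for sum c x^alpha d^beta.\<close>

type_synonym mindex = "nat \<Rightarrow> nat"
type_synonym cpoly = "mindex \<Rightarrow> complex"
type_synonym weyl = "mindex \<times> mindex \<Rightarrow> complex"

definition is_poly :: "nat \<Rightarrow> cpoly \<Rightarrow> bool" where
  "is_poly n f \<longleftrightarrow> finite {g. f g \<noteq> 0} \<and> (\<forall>g. f g \<noteq> 0 \<longrightarrow> (\<forall>i\<ge>n. g i = 0))"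

definition is_weyl :: "nat \<Rightarrow> weyl \<Rightarrow> bool" where
  "is_weyl n P \<longleftrightarrow> finite {m. P m \<noteq> 0} \<and>
     (\<forall>a b. P (a, b) \<noteq> 0 \<longrightarrow> (\<forall>i\<ge>n. a i = 0 \<and> b i = 0))"

definition mono :: "nat \<Rightarrow> mindex \<Rightarrow> (nat \<Rightarrow> complex) \<Rightarrow> complex" where
  "mono n a z = (\<Prod>i<n. z i ^ a i)"

definition peval :: "nat \<Rightarrow> cpoly \<Rightarrow> (nat \<Rightarrow> complex) \<Rightarrow> complex" where
  "peval n f z = (\<Sum>g\<in>{g. f g \<noteq> 0}. f g * mono n g z)"

definition partial :: "nat \<Rightarrow> ((nat \<Rightarrow> complex) \<Rightarrow> complex) \<Rightarrow> (nat \<Rightarrow> complex) \<Rightarrow> complex" where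
  "partial i g z = deriv (\<lambda>t. g (z(i := t))) (z i)"

fun dpow :: "nat \<Rightarrow> mindex \<Rightarrow> ((nat \<Rightarrow> complex) \<Rightarrow> complex) \<Rightarrow> (nat \<Rightarrow> complex) \<Rightarrow> complex" where
  "dpow 0 b g = g"
| "dpow (Suc k) b g = (partial k ^^ b k) (dpow k b g)"

definition act :: "nat \<Rightarrow> weyl \<Rightarrow> ((nat \<Rightarrow> complex) \<Rightarrow> complex) \<Rightarrow> (nat \<Rightarrow> complex) \<Rightarrow> complex" where
  "act n P g z = (\<Sum>m\<in>{m. P m \<noteq> 0}. P m * mono n (fst m) z * dpow n (snd m) g z)"

text \<open>Ann(1/h^l): operators P with P . (1/h^l) = 0 as a rational function, i.e.
  vanishing wherever h is nonzero.\<close>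
definition Ann_inv_pow :: "nat \<Rightarrow> cpoly \<Rightarrow> nat \<Rightarrow> weyl set" where
  "Ann_inv_pow n h l = {P. is_weyl n P \<and>
     (\<forall>z. peval n h z \<noteq> 0 \<longrightarrow> act n P (\<lambda>z. inverse (peval n h z ^ l)) z = 0)}"

text \<open>Left multiplication by x_i and by d_i on normally ordered expressions
  (d_i x^a d^b = x^a d^(b+e_i) + a_i x^(a-e_i) d^b).\<close>
definition lmul_x :: "nat \<Rightarrow> weyl \<Rightarrow> weyl" where
  "lmul_x i P = (\<lambda>(a, b). if a i \<ge> 1 then P (a(i := a i - 1), b) else 0)"

definition lmul_d :: "nat \<Rightarrow> weyl \<Rightarrow> weyl" where
  "lmul_d i P = (\<lambda>(a, b). (if b i \<ge> 1 then P (a, b(i := b i - 1)) else 0)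
                         + of_nat (a i + 1) * P (a(i := a i + 1), b))"

text \<open>Left ideal of D_n generated by S (D_n is generated as a C-algebra by the x_i, d_i).\<close>
inductive_set left_ideal :: "nat \<Rightarrow> weyl set \<Rightarrow> weyl set" for n S where
  gen: "P \<in> S \<Longrightarrow> P \<in> left_ideal n S"
| zero: "(\<lambda>_. 0) \<in> left_ideal n S"
| add: "P \<in> left_ideal n S \<Longrightarrow> Q \<in> left_ideal n S \<Longrightarrow> (\<lambda>m. P m + Q m) \<in> left_ideal n S"
| smul: "P \<in> left_ideal n S \<Longrightarrow> (\<lambda>m. c * P m) \<in> left_ideal n S"
| lx: "P \<in> left_ideal n S \<Longrightarrow> i < n \<Longrightarrow> lmul_x i P \<in> left_ideal n S"
| ld: "P \<in> left_ideal n S \<Longrightarrow> i < n \<Longrightarrow> lmul_d i P \<in> left_ideal n S"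

definition wt :: "nat \<Rightarrow> (nat \<Rightarrow> real) \<Rightarrow> mindex \<times> mindex \<Rightarrow> real" where
  "wt n w m = (\<Sum>i<n. w i * (real (snd m i) - real (fst m i)))"

definition initial :: "nat \<Rightarrow> (nat \<Rightarrow> real) \<Rightarrow> weyl \<Rightarrow> weyl" where
  "initial n w P = (\<lambda>m. if P m \<noteq> 0 \<and> wt n w m = Max (wt n w ` {m. P m \<noteq> 0}) then P m else 0)"

definition initial_ideal :: "nat \<Rightarrow> (nat \<Rightarrow> real) \<Rightarrow> weyl set \<Rightarrow> weyl set" where
  "initial_ideal n w I = left_ideal n {initial n w P | P. P \<in> I \<and> P \<noteq> (\<lambda>_. 0)}"

definition emb :: "mindex \<Rightarrow> nat \<Rightarrow> real" where
  "emb g = (\<lambda>i. real (g i))"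

definition ipr :: "nat \<Rightarrow> (nat \<Rightarrow> real) \<Rightarrow> (nat \<Rightarrow> real) \<Rightarrow> real" where
  "ipr n u w = (\<Sum>i<n. u i * w i)"

definition Newton :: "cpoly \<Rightarrow> (nat \<Rightarrow> real) set" where
  "Newton f = {u. \<exists>c :: mindex \<Rightarrow> real. (\<forall>g\<in>{g. f g \<noteq> 0}. c g \<ge> 0) \<and>
      (\<Sum>g\<in>{g. f g \<noteq> 0}. c g) = 1 \<and> u = (\<lambda>i. \<Sum>g\<in>{g. f g \<noteq> 0}. c g * emb g i)}"

definition ordf :: "nat \<Rightarrow> cpoly \<Rightarrow> (nat \<Rightarrow> real) \<Rightarrow> real" where
  "ordf n f w = Inf ((\<lambda>u. ipr n u w) ` Newton f)"

definition face :: "nat \<Rightarrow> cpoly \<Rightarrow> (nat \<Rightarrow> real) \<Rightarrow> (nat \<Rightarrow> real) set" where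
  "face n f w = {u \<in> Newton f. ipr n u w = ordf n f w}"

definition face_poly :: "cpoly \<Rightarrow> (nat \<Rightarrow> real) set \<Rightarrow> cpoly" where
  "face_poly f T = (\<lambda>g. if emb g \<in> T then f g else 0)"

end

theory Submission
  imports Defs
begin


definition ffc :: "nat \<Rightarrow> nat \<Rightarrow> nat" where "ffc k m = (\<Prod>j<m. (k - j))"

lemma ffc_0[simp]: "ffc k 0 = 1" by (simp add: ffc_def)
lemma ffc_Suc: "ffc k (Suc m) = ffc k m * (k - m)" by (simp add: ffc_def)
lemma ffc_zero: "k < m \<Longrightarrow> ffc k m = 0"
  unfolding ffc_def by (rule prod_zero) auto

definition dp :: "nat \<Rightarrow> mindex \<Rightarrow> cpoly \<Rightarrow> (nat \<Rightarrow> complex) \<Rightarrow> complex" where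
  "dp n c p z = (\<Sum>g\<in>{g. p g \<noteq> 0}. p g * (\<Prod>i<n. of_nat (ffc (g i) (c i)) * z i ^ (g i - c i)))"

lemma dp_0: "dp n (\<lambda>_. 0) p = peval n p"
  by (rule ext) (simp add: dp_def peval_def mono_def)

lemma deriv_factor:
  "((\<lambda>t::complex. of_nat (ffc k m) * t ^ (k - m)) has_field_derivative
     of_nat (ffc k (Suc m)) * x ^ (k - Suc m)) (at x)"
proof -
  have "((\<lambda>t::complex. of_nat (ffc k m) * t ^ (k - m)) has_field_derivative
     of_nat (ffc k m) * (of_nat (k - m) * x ^ (k - m - 1))) (at x)"
    by (intro derivative_eq_intros) auto
  moreover have "of_nat (ffc k m) * (of_nat (k - m) * x ^ (k - m - 1)) = of_nat (ffc k (Suc m)) * x ^ (k - Suc m)"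
    unfolding ffc_Suc of_nat_mult by (simp add: mult.assoc)
  ultimately show ?thesis by (simp only:)
qed

lemma dp_deriv:
  assumes "i < n"
  shows "((\<lambda>t. dp n c p (z(i:=t))) has_field_derivative dp n (c(i:=c i+1)) p z) (at (z i))"
proof -
  define R where "R g = (\<Prod>j\<in>{..<n}-{i}. of_nat (ffc (g j) (c j)) * z j ^ (g j - c j) :: complex)" for g
  have split: "(\<Prod>j<n. of_nat (ffc (g j) (d j)) * (y::nat\<Rightarrow>complex) j ^ (g j - d j)) =
      (of_nat (ffc (g i) (d i)) * y i ^ (g i - d i)) * (\<Prod>j\<in>{..<n}-{i}. of_nat (ffc (g j) (d j)) * y j ^ (g j - d j))" for g d y
    using assms by (subst prod.remove[of _ i]) auto
  have R1: "(\<Prod>j\<in>{..<n}-{i}. of_nat (ffc (g j) (c j)) * (z(i:=t)) j ^ (g j - c j)) = R g" for g t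
    unfolding R_def by (rule prod.cong) auto
  have R2: "(\<Prod>j\<in>{..<n}-{i}. of_nat (ffc (g j) ((c(i:=c i+1)) j)) * z j ^ (g j - (c(i:=c i+1)) j)) = R g" for g
    unfolding R_def by (rule prod.cong) auto
  have eq1: "dp n c p (z(i:=t)) = (\<Sum>g\<in>{g. p g \<noteq> 0}. p g * ((of_nat (ffc (g i) (c i)) * t ^ (g i - c i)) * R g))" for t
    unfolding dp_def by (rule sum.cong[OF refl]) (simp only: split[of _ c] R1 fun_upd_same)
  have eq2: "dp n (c(i:=c i+1)) p z = (\<Sum>g\<in>{g. p g \<noteq> 0}. p g * ((of_nat (ffc (g i) (Suc (c i))) * z i ^ (g i - Suc (c i))) * R g))"
    unfolding dp_def by (rule sum.cong[OF refl]) (simp only: split[of _ "c(i:=c i+1)"] R2 fun_upd_same Suc_eq_plus1)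
  show ?thesis
    unfolding eq1 eq2
    by (intro DERIV_sum DERIV_cmult DERIV_cmult_right deriv_factor)
qed

datatype ex = Cst complex | Var nat | Df "nat \<Rightarrow> nat" | Ad ex ex | Mu ex ex

fun evalE :: "nat \<Rightarrow> cpoly \<Rightarrow> ex \<Rightarrow> (nat \<Rightarrow> complex) \<Rightarrow> complex" where
  "evalE n p (Cst c) z = c"
| "evalE n p (Var i) z = z i"
| "evalE n p (Df c) z = dp n c p z"
| "evalE n p (Ad A B) z = evalE n p A z + evalE n p B z"
| "evalE n p (Mu A B) z = evalE n p A z * evalE n p B z"

fun dE :: "nat \<Rightarrow> ex \<Rightarrow> ex" where
  "dE i (Cst c) = Cst 0"
| "dE i (Var j) = Cst (if i = j then 1 else 0)"
| "dE i (Df c) = Df (c(i := c i + 1))"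
| "dE i (Ad A B) = Ad (dE i A) (dE i B)"
| "dE i (Mu A B) = Ad (Mu (dE i A) B) (Mu A (dE i B))"

lemma evalE_deriv:
  assumes "i < n"
  shows "((\<lambda>t. evalE n p E (z(i:=t))) has_field_derivative evalE n p (dE i E) z) (at (z i))"
proof (induction E)
  case (Cst x)
  then show ?case by simp
next
  case (Var j)
  show ?case
  proof (cases "i = j")
    case True
    then show ?thesis by (simp add: DERIV_ident)
  next
    case False
    then show ?thesis by simp
  qed
next
  case (Df c)
  show ?case using dp_deriv[OF assms, of c p z] by (simp only: evalE.simps dE.simps)
next
  case (Ad E1 E2)
  then show ?case by (simp add: DERIV_add)
next
  case (Mu E1 E2)
  note D = DERIV_mult[OF Mu.IH]
  show ?case using D unfolding fun_upd_triv evalE.simps dE.simps by (simp only: add.commute mult.commute)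
qed

lemma evalE_dE_comm: "evalE n p (dE i (dE j E)) z = evalE n p (dE j (dE i E)) z"
proof (induction E)
  case (Df c)
  then show ?case by (cases "i = j") (simp_all add: fun_upd_twist)
next
  case (Mu E1 E2)
  then show ?case by (simp add: algebra_simps)
qed auto

lemma evalE_deriv_gen:
  assumes "i < n"
  shows "((\<lambda>t. evalE n p E (z(i:=t))) has_field_derivative evalE n p (dE i E) (z(i:=s))) (at s)"
  using evalE_deriv[OF assms, of p E "z(i:=s)"] by simp

lemma evalE_line_cont: "i < n \<Longrightarrow> continuous_on UNIV (\<lambda>t. evalE n p E (z(i:=t)))"
  by (intro continuous_at_imp_continuous_on ballI DERIV_isCont[OF evalE_deriv_gen])

definition zero_mi :: mindex where "zero_mi = (\<lambda>_. 0)"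
definition unit_mi :: "nat \<Rightarrow> mindex" where "unit_mi i = (\<lambda>_. 0)(i := 1)"

lemma peval_evalE: "peval n p z = evalE n p (Df zero_mi) z"
  by (simp add: dp_0 zero_mi_def)

lemma line_open: "i < n \<Longrightarrow> open {t. peval n p (z(i:=t)) \<noteq> 0}"
  unfolding peval_evalE by (rule open_Collect_neq[OF evalE_line_cont continuous_on_const])

definition step :: "nat \<Rightarrow> nat \<Rightarrow> ex \<Rightarrow> ex" where
  "step i k E = Ad (Mu (dE i E) (Df zero_mi)) (Mu (Cst (- of_nat k)) (Mu E (Df (unit_mi i))))"

definition Rep :: "nat \<Rightarrow> cpoly \<Rightarrow> ((nat \<Rightarrow> complex) \<Rightarrow> complex) \<Rightarrow> ex \<Rightarrow> nat \<Rightarrow> bool" where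
  "Rep n p G E k \<longleftrightarrow> (\<forall>z. peval n p z \<noteq> 0 \<longrightarrow> G z = evalE n p E z * inverse (peval n p z) ^ k)"

lemma dE_zero: "dE i (Df zero_mi) = Df (unit_mi i)"
  by (simp add: zero_mi_def unit_mi_def)

lemma quot_deriv:
  fixes A F :: "complex \<Rightarrow> complex"
  assumes "(A has_field_derivative A') (at x)" "(F has_field_derivative F') (at x)" "F x \<noteq> 0"
  shows "((\<lambda>t. A t * inverse (F t) ^ k) has_field_derivative (A' * F x + (- of_nat k) * (A x * F')) * inverse (F x) ^ (k+1)) (at x)"
proof -
  note D = DERIV_mult[OF assms(1) DERIV_power[OF DERIV_inverse_fun[OF assms(2,3)], of k]]
  moreover have "A' * inverse (F x) ^ k + of_nat k * (- (F' * inverse (F x ^ Suc (Suc 0))) * inverse (F x) ^ (k - Suc 0)) * A x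
     = (A' * F x + (- of_nat k) * (A x * F')) * inverse (F x) ^ (k+1)"
  proof (cases k)
    case 0
    then show ?thesis using assms(3) by (simp add: field_simps)
  next
    case (Suc m)
    then show ?thesis using assms(3) by (simp add: field_simps)
  qed
  ultimately show ?thesis by (simp only:)
qed

lemma Rep_deriv:
  assumes "i < n" "Rep n p G E k" "peval n p z \<noteq> 0"
  shows "((\<lambda>t. G (z(i:=t))) has_field_derivative evalE n p (step i k E) z * inverse (peval n p z) ^ (k+1)) (at (z i))"
proof -
  have D: "((\<lambda>t. evalE n p E (z(i:=t)) * inverse (evalE n p (Df zero_mi) (z(i:=t))) ^ k) has_field_derivative
     (evalE n p (dE i E) z * evalE n p (Df zero_mi) (z(i:=z i)) + (- of_nat k) * (evalE n p E (z(i:=z i)) * evalE n p (dE i (Df zero_mi)) z))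
      * inverse (evalE n p (Df zero_mi) (z(i:=z i))) ^ (k+1)) (at (z i))"
    by (rule quot_deriv[OF evalE_deriv[OF assms(1)] evalE_deriv[OF assms(1)]])
      (use assms(3) in \<open>simp add: peval_evalE\<close>)
  show ?thesis
  proof (rule has_field_derivative_transform_within_open[OF _ line_open[OF assms(1)]])
    show "z i \<in> {t. peval n p (z(i:=t)) \<noteq> 0}" using assms(3) by simp
    show "evalE n p E (z(i:=t)) * inverse (peval n p (z(i:=t))) ^ k = G (z(i:=t))"
      if "t \<in> {t. peval n p (z(i:=t)) \<noteq> 0}" for t
      using assms(2) that unfolding Rep_def by auto
    show "((\<lambda>t. evalE n p E (z(i:=t)) * inverse (peval n p (z(i:=t))) ^ k) has_field_derivative
      evalE n p (step i k E) z * inverse (peval n p z) ^ (k+1)) (at (z i))"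
      using D unfolding peval_evalE[symmetric] fun_upd_triv dE_zero
      by (simp add: step_def peval_evalE)
  qed
qed

lemma Rep_partial:
  assumes "i < n" "Rep n p G E k"
  shows "Rep n p (partial i G) (step i k E) (k+1)"
  unfolding Rep_def partial_def using Rep_deriv[OF assms] DERIV_imp_deriv by blast

fun itS :: "nat \<Rightarrow> nat \<Rightarrow> nat \<Rightarrow> ex \<Rightarrow> ex" where
  "itS i 0 k E = E"
| "itS i (Suc m) k E = step i (k + m) (itS i m k E)"

lemma Rep_iter:
  assumes "i < n" "Rep n p G E k"
  shows "Rep n p ((partial i ^^ m) G) (itS i m k E) (k + m)"
proof (induction m)
  case 0
  then show ?case using assms(2) by simp
next
  case (Suc m)
  then show ?case using Rep_partial[OF assms(1) Suc] by simp
qed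

fun Qd :: "nat \<Rightarrow> nat \<Rightarrow> mindex \<Rightarrow> ex" where
  "Qd l 0 b = Cst 1"
| "Qd l (Suc j) b = itS j (b j) (l + (\<Sum>i<j. b i)) (Qd l j b)"

definition ginv :: "nat \<Rightarrow> cpoly \<Rightarrow> nat \<Rightarrow> (nat \<Rightarrow> complex) \<Rightarrow> complex" where
  "ginv n p l = (\<lambda>z. inverse (peval n p z ^ l))"

lemma Rep_g: "Rep n p (ginv n p l) (Cst 1) l"
  unfolding Rep_def ginv_def by (simp add: power_inverse)

lemma Rep_dpow: "j \<le> n \<Longrightarrow> Rep n p (dpow j b (ginv n p l)) (Qd l j b) (l + (\<Sum>i<j. b i))"
proof (induction j)
  case 0
  then show ?case using Rep_g by simp
next
  case (Suc j)
  then have "j < n" by simp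
  from Rep_iter[OF this Suc.IH, of "b j"] Suc.prems show ?case by (simp add: add.assoc)
qed

lemma zero_upd[simp]: "zero_mi(i := Suc (zero_mi i)) = unit_mi i"
  by (simp add: zero_mi_def unit_mi_def)

lemma unit_upd: "(unit_mi i)(j := Suc (unit_mi i j)) = (unit_mi j)(i := Suc (unit_mi j i))"
  by (auto simp: unit_mi_def fun_eq_iff)

lemma step_comm:
  "evalE n p (step i (Suc k) (step j k E)) z = evalE n p (step j (Suc k) (step i k E)) z"
proof -
  have c1: "evalE n p (dE i (dE j E)) z = evalE n p (dE j (dE i E)) z" by (rule evalE_dE_comm)
  have c2: "evalE n p (dE i (Df (unit_mi j))) z = evalE n p (dE j (Df (unit_mi i))) z"
    using evalE_dE_comm[of n p i j "Df zero_mi" z] unfolding dE_zero .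
  show ?thesis
    unfolding step_def dE.simps evalE.simps dE_zero c1 c2
    by (simp add: algebra_simps unit_upd)
qed

definition eqU :: "nat \<Rightarrow> cpoly \<Rightarrow> ((nat \<Rightarrow> complex) \<Rightarrow> complex) \<Rightarrow> ((nat \<Rightarrow> complex) \<Rightarrow> complex) \<Rightarrow> bool" where
  "eqU n p G1 G2 \<longleftrightarrow> (\<forall>z. peval n p z \<noteq> 0 \<longrightarrow> G1 z = G2 z)"

lemma eqU_refl: "eqU n p G G" by (simp add: eqU_def)
lemma eqU_trans: "eqU n p G1 G2 \<Longrightarrow> eqU n p G2 G3 \<Longrightarrow> eqU n p G1 G3" by (simp add: eqU_def)
lemma eqU_sym: "eqU n p G1 G2 \<Longrightarrow> eqU n p G2 G1" by (simp add: eqU_def)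

lemma partial_comm:
  assumes "i < n" "j < n" "Rep n p G E k"
  shows "eqU n p (partial i (partial j G)) (partial j (partial i G))"
  using Rep_partial[OF assms(1) Rep_partial[OF assms(2,3)]] Rep_partial[OF assms(2) Rep_partial[OF assms(1,3)]]
  unfolding eqU_def Rep_def by (simp add: step_comm)

lemma partial_cong:
  assumes "i < n" "eqU n p G1 G2"
  shows "eqU n p (partial i G1) (partial i G2)"
  unfolding eqU_def partial_def
proof (intro allI impI deriv_cong_ev)
  fix z assume z: "peval n p z \<noteq> 0"
  show "\<forall>\<^sub>F t in nhds (z i). G1 (z(i := t)) = G2 (z(i := t))"
    unfolding eventually_nhds
    by (rule exI[of _ "{t. peval n p (z(i:=t)) \<noteq> 0}"]) (use line_open[OF assms(1)] z assms(2) in \<open>auto simp: eqU_def\<close>)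
qed simp

lemma partial_cong_iter:
  assumes "i < n" "eqU n p G1 G2"
  shows "eqU n p ((partial i ^^ m) G1) ((partial i ^^ m) G2)"
  by (induction m) (auto intro: partial_cong[OF assms(1)] simp: assms(2))

lemma partial_comm_iter:
  assumes "i < n" "j < n" "Rep n p G E k"
  shows "eqU n p (partial i ((partial j ^^ m) G)) ((partial j ^^ m) (partial i G))"
proof (induction m)
  case 0
  then show ?case by (simp add: eqU_refl)
next
  case (Suc m)
  have "eqU n p (partial i (partial j ((partial j ^^ m) G))) (partial j (partial i ((partial j ^^ m) G)))"
    by (rule partial_comm[OF assms(1,2) Rep_iter[OF assms(2,3)]])
  moreover have "eqU n p (partial j (partial i ((partial j ^^ m) G))) (partial j ((partial j ^^ m) (partial i G)))"
    by (rule partial_cong[OF assms(2) Suc])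
  ultimately show ?case by (simp add: eqU_trans[of n p _ "partial j (partial i ((partial j ^^ m) G))"])
qed

lemma dpow_local: "(\<And>i. i < j \<Longrightarrow> b i = b' i) \<Longrightarrow> dpow j b g = dpow j b' g"
  by (induction j) auto

lemma dpow_shift:
  assumes "i < j" "j \<le> n"
  shows "eqU n p (dpow j (b(i:=b i+1)) (ginv n p l)) (partial i (dpow j b (ginv n p l)))"
  using assms
proof (induction j)
  case 0
  then show ?case by simp
next
  case (Suc j)
  show ?case
  proof (cases "j = i")
    case True
    have "dpow i (b(i:=b i+1)) (ginv n p l) = dpow i b (ginv n p l)"
      by (rule dpow_local) auto
    then have E: "dpow (Suc j) (b(i:=b i+1)) (ginv n p l) = partial i (dpow (Suc j) b (ginv n p l))"
      unfolding True dpow.simps fun_upd_same by simp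
    show ?thesis by (subst E) (rule eqU_refl)
  next
    case False
    with Suc.prems have ij: "i < j" "j < n" "i < n" by auto
    have A: "dpow (Suc j) (b(i:=b i+1)) (ginv n p l) = (partial j ^^ b j) (dpow j (b(i:=b i+1)) (ginv n p l))"
      using False by simp
    have B: "eqU n p ((partial j ^^ b j) (dpow j (b(i:=b i+1)) (ginv n p l)))
        ((partial j ^^ b j) (partial i (dpow j b (ginv n p l))))"
      by (rule partial_cong_iter[OF ij(2) Suc.IH]) (use ij in auto)
    have C: "eqU n p ((partial j ^^ b j) (partial i (dpow j b (ginv n p l))))
        (partial i ((partial j ^^ b j) (dpow j b (ginv n p l))))"
      by (rule eqU_sym, rule partial_comm_iter[OF ij(3,2) Rep_dpow]) (use ij in auto)
    show ?thesis unfolding A dpow.simps(2)[of j b] by (rule eqU_trans[OF B C])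
  qed
qed




lemma sum_reindex_supp:
  fixes P Q :: "'a \<Rightarrow> complex" and \<phi> :: "'a \<Rightarrow> 'a"
  assumes fin: "finite {m. P m \<noteq> 0}" and inj: "inj_on \<phi> A"
    and Q1: "\<And>m. m \<in> A \<Longrightarrow> Q (\<phi> m) = c m * P m"
    and Q2: "\<And>m. m \<notin> \<phi> ` A \<Longrightarrow> Q m = 0"
    and c0: "\<And>m. m \<notin> A \<Longrightarrow> c m * P m = 0"
  shows "finite {m. Q m \<noteq> 0}"
    and "(\<Sum>m\<in>{m. Q m \<noteq> 0}. Q m * T m) = (\<Sum>m\<in>{m. P m \<noteq> 0}. c m * P m * T (\<phi> m))"
proof -
  have sub: "{m. Q m \<noteq> 0} \<subseteq> \<phi> ` (A \<inter> {m. P m \<noteq> 0})"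
  proof
    fix m assume "m \<in> {m. Q m \<noteq> 0}"
    then have "Q m \<noteq> 0" by simp
    then obtain m' where m': "m' \<in> A" "m = \<phi> m'" using Q2 by blast
    then have "c m' * P m' \<noteq> 0" using Q1 \<open>Q m \<noteq> 0\<close> by simp
    then show "m \<in> \<phi> ` (A \<inter> {m. P m \<noteq> 0})" using m' by auto
  qed
  have finA: "finite (A \<inter> {m. P m \<noteq> 0})" using fin by simp
  then show "finite {m. Q m \<noteq> 0}" using sub finite_subset by blast
  have inj': "inj_on \<phi> (A \<inter> {m. P m \<noteq> 0})" using inj by (rule inj_on_subset) auto
  have "(\<Sum>m\<in>{m. Q m \<noteq> 0}. Q m * T m) = (\<Sum>m\<in>\<phi> ` (A \<inter> {m. P m \<noteq> 0}). Q m * T m)"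
    by (rule sum.mono_neutral_left) (use finA sub in auto)
  also have "\<dots> = (\<Sum>m\<in>A \<inter> {m. P m \<noteq> 0}. Q (\<phi> m) * T (\<phi> m))"
    by (rule sum.reindex[OF inj', unfolded comp_def])
  also have "\<dots> = (\<Sum>m\<in>A \<inter> {m. P m \<noteq> 0}. c m * P m * T (\<phi> m))"
    using Q1 by simp
  also have "\<dots> = (\<Sum>m\<in>{m. P m \<noteq> 0}. c m * P m * T (\<phi> m))"
    by (rule sum.mono_neutral_left) (use fin c0 in auto)
  finally show "(\<Sum>m\<in>{m. Q m \<noteq> 0}. Q m * T m) = (\<Sum>m\<in>{m. P m \<noteq> 0}. c m * P m * T (\<phi> m))" .
qed

lemma act_sup:
  assumes "finite S" "{m. P m \<noteq> 0} \<subseteq> S"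
  shows "act n P g z = (\<Sum>m\<in>S. P m * mono n (fst m) z * dpow n (snd m) g z)"
  unfolding act_def by (rule sum.mono_neutral_left) (use assms in auto)

definition shx :: "nat \<Rightarrow> mindex \<times> mindex \<Rightarrow> mindex \<times> mindex" where
  "shx i = (\<lambda>(a, b). (a(i := a i + 1), b))"
definition shd :: "nat \<Rightarrow> mindex \<times> mindex \<Rightarrow> mindex \<times> mindex" where
  "shd i = (\<lambda>(a, b). (a, b(i := b i + 1)))"
definition shxm :: "nat \<Rightarrow> mindex \<times> mindex \<Rightarrow> mindex \<times> mindex" where
  "shxm i = (\<lambda>(a, b). (a(i := a i - 1), b))"

lemma inj_shx: "inj (shx i)"
  unfolding shx_def inj_def by (auto simp: fun_eq_iff split: if_splits)
lemma inj_shd: "inj (shd i)"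
  unfolding shd_def inj_def by (auto simp: fun_eq_iff split: if_splits)
lemma inj_shxm: "inj_on (shxm i) {m. fst m i \<ge> 1}"
  unfolding shxm_def inj_on_def by (auto simp: fun_eq_iff split: if_splits)

definition Q1 :: "nat \<Rightarrow> weyl \<Rightarrow> weyl" where
  "Q1 i P = (\<lambda>(a, b). if b i \<ge> 1 then P (a, b(i := b i - 1)) else 0)"
definition Q2 :: "nat \<Rightarrow> weyl \<Rightarrow> weyl" where
  "Q2 i P = (\<lambda>(a, b). of_nat (a i + 1) * P (a(i := a i + 1), b))"

lemma lmul_d_split: "lmul_d i P m = Q1 i P m + Q2 i P m"
  by (cases m) (simp add: lmul_d_def Q1_def Q2_def)

lemma lmul_x_reindex:
  assumes "finite {m. P m \<noteq> 0}"
  shows "finite {m. lmul_x i P m \<noteq> 0}"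
    "(\<Sum>m\<in>{m. lmul_x i P m \<noteq> 0}. lmul_x i P m * T m) = (\<Sum>m\<in>{m. P m \<noteq> 0}. 1 * P m * T (shx i m))"
proof -
  have A: "lmul_x i P (shx i m) = 1 * P m" for m
    by (cases m) (simp add: lmul_x_def shx_def)
  have B: "lmul_x i P m = 0" if "m \<notin> shx i ` UNIV" for m
  proof (cases m)
    case (Pair a b)
    have "a i = 0"
    proof (rule ccontr)
      assume "a i \<noteq> 0"
      then have "m = shx i (a(i := a i - 1), b)" using Pair by (simp add: shx_def)
      then show False using that by blast
    qed
    then show ?thesis using Pair by (simp add: lmul_x_def)
  qed
  show "finite {m. lmul_x i P m \<noteq> 0}"
    by (rule sum_reindex_supp(1)[OF assms inj_shx A B]) auto
  show "(\<Sum>m\<in>{m. lmul_x i P m \<noteq> 0}. lmul_x i P m * T m) = (\<Sum>m\<in>{m. P m \<noteq> 0}. 1 * P m * T (shx i m))"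
    by (rule sum_reindex_supp(2)[OF assms inj_shx A B]) auto
qed

lemma Q1_reindex:
  assumes "finite {m. P m \<noteq> 0}"
  shows "finite {m. Q1 i P m \<noteq> 0}"
    "(\<Sum>m\<in>{m. Q1 i P m \<noteq> 0}. Q1 i P m * T m) = (\<Sum>m\<in>{m. P m \<noteq> 0}. 1 * P m * T (shd i m))"
proof -
  have A: "Q1 i P (shd i m) = 1 * P m" for m
    by (cases m) (simp add: Q1_def shd_def)
  have B: "Q1 i P m = 0" if "m \<notin> shd i ` UNIV" for m
  proof (cases m)
    case (Pair a b)
    have "b i = 0"
    proof (rule ccontr)
      assume "b i \<noteq> 0"
      then have "m = shd i (a, b(i := b i - 1))" using Pair by (simp add: shd_def)
      then show False using that by blast
    qed
    then show ?thesis using Pair by (simp add: Q1_def)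
  qed
  show "finite {m. Q1 i P m \<noteq> 0}"
    by (rule sum_reindex_supp(1)[OF assms inj_shd A B]) auto
  show "(\<Sum>m\<in>{m. Q1 i P m \<noteq> 0}. Q1 i P m * T m) = (\<Sum>m\<in>{m. P m \<noteq> 0}. 1 * P m * T (shd i m))"
    by (rule sum_reindex_supp(2)[OF assms inj_shd A B]) auto
qed

lemma Q2_reindex:
  assumes "finite {m. P m \<noteq> 0}"
  shows "finite {m. Q2 i P m \<noteq> 0}"
    "(\<Sum>m\<in>{m. Q2 i P m \<noteq> 0}. Q2 i P m * T m) = (\<Sum>m\<in>{m. P m \<noteq> 0}. of_nat (fst m i) * P m * T (shxm i m))"
proof -
  have A: "Q2 i P (shxm i m) = of_nat (fst m i) * P m" if "m \<in> {m. fst m i \<ge> 1}" for m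
    using that by (cases m) (simp add: Q2_def shxm_def)
  have B: "Q2 i P m = 0" if "m \<notin> shxm i ` {m. fst m i \<ge> 1}" for m
  proof (cases m)
    case (Pair a b)
    have "m = shxm i (a(i := a i + 1), b)" using Pair by (simp add: shxm_def)
    then have "P (a(i := a i + 1), b) = 0" using that by force
    then show ?thesis using Pair by (simp add: Q2_def)
  qed
  have C: "of_nat (fst m i) * P m = 0" if "m \<notin> {m. fst m i \<ge> 1}" for m
    using that by simp
  show "finite {m. Q2 i P m \<noteq> 0}"
    by (rule sum_reindex_supp(1)[OF assms inj_shxm A B C])
  show "(\<Sum>m\<in>{m. Q2 i P m \<noteq> 0}. Q2 i P m * T m) = (\<Sum>m\<in>{m. P m \<noteq> 0}. of_nat (fst m i) * P m * T (shxm i m))"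
    by (rule sum_reindex_supp(2)[OF assms inj_shxm A B C])
qed

lemma prod_split_i:
  fixes F :: "nat \<Rightarrow> complex"
  assumes "i < n"
  shows "(\<Prod>j<n. F j) = F i * (\<Prod>j\<in>{..<n}-{i}. F j)"
  by (metis assms finite_lessThan lessThan_iff prod.remove)

lemma mono_upd:
  assumes "i < n"
  shows "mono n (a(i := a i + 1)) z = z i * mono n a z"
proof -
  have "(\<Prod>j\<in>{..<n}-{i}. z j ^ (a(i := a i + 1)) j) = (\<Prod>j\<in>{..<n}-{i}. z j ^ a j)"
    by (rule prod.cong) auto
  then show ?thesis
    unfolding mono_def prod_split_i[OF assms, of "\<lambda>j. z j ^ (a(i := a i + 1)) j"] prod_split_i[OF assms, of "\<lambda>j. z j ^ a j"]
    by simp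
qed

lemma mono_deriv:
  fixes z :: "nat \<Rightarrow> complex"
  assumes "i < n"
  shows "((\<lambda>t. mono n a (z(i:=t))) has_field_derivative of_nat (a i) * mono n (a(i := a i - 1)) z) (at (z i))"
proof -
  define R where "R = (\<Prod>j\<in>{..<n}-{i}. z j ^ a j)"
  have R1: "(\<Prod>j\<in>{..<n}-{i}. (z(i:=t)) j ^ a j) = R" for t
    unfolding R_def by (rule prod.cong) auto
  have R2: "(\<Prod>j\<in>{..<n}-{i}. z j ^ (a(i := a i - 1)) j) = R"
    unfolding R_def by (rule prod.cong) auto
  have e1: "mono n a (z(i:=t)) = t ^ a i * R" for t
    unfolding mono_def prod_split_i[OF assms, of "\<lambda>j. (z(i:=t)) j ^ a j"] R1 by simp
  have e2: "mono n (a(i := a i - 1)) z = z i ^ (a i - 1) * R"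
    unfolding mono_def prod_split_i[OF assms, of "\<lambda>j. z j ^ (a(i := a i - 1)) j"] R2 by simp
  have "((\<lambda>t. t ^ a i) has_field_derivative of_nat (a i) * (1 * z i ^ (a i - Suc 0))) (at (z i))"
    by (rule DERIV_power[OF DERIV_ident])
  from DERIV_cmult_right[OF this, of R] show ?thesis unfolding e1 e2 by (simp add: mult.assoc)
qed

lemma dpow_deriv:
  assumes "i < n" "peval n p z \<noteq> 0"
  shows "((\<lambda>t. dpow n b (ginv n p l) (z(i:=t))) has_field_derivative dpow n (b(i := b i + 1)) (ginv n p l) z) (at (z i))"
proof -
  have R: "Rep n p (dpow n b (ginv n p l)) (Qd l n b) (l + (\<Sum>i<n. b i))" by (rule Rep_dpow) simp
  note D = Rep_deriv[OF assms(1) R assms(2)]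
  have "partial i (dpow n b (ginv n p l)) z = evalE n p (step i (l + (\<Sum>i<n. b i)) (Qd l n b)) z * inverse (peval n p z) ^ (l + (\<Sum>i<n. b i) + 1)"
    unfolding partial_def by (rule DERIV_imp_deriv[OF D])
  moreover have "dpow n (b(i := b i + 1)) (ginv n p l) z = partial i (dpow n b (ginv n p l)) z"
    using dpow_shift[OF assms(1) order_refl, of p b l] assms(2) unfolding eqU_def by blast
  ultimately show ?thesis using D by simp
qed

lemma is_weyl_zero: "is_weyl n (\<lambda>_. 0)" by (simp add: is_weyl_def)

lemma is_weyl_add: "is_weyl n P \<Longrightarrow> is_weyl n Q \<Longrightarrow> is_weyl n (\<lambda>m. P m + Q m)"
proof -
  assume a: "is_weyl n P" "is_weyl n Q"
  have F: "finite {m. P m + Q m \<noteq> 0}"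
    by (rule finite_subset[of _ "{m. P m \<noteq> 0} \<union> {m. Q m \<noteq> 0}"]) (use a in \<open>auto simp: is_weyl_def\<close>)
  have I: "\<forall>aa b. P (aa, b) + Q (aa, b) \<noteq> 0 \<longrightarrow> (\<forall>j\<ge>n. aa j = 0 \<and> b j = 0)"
  proof (intro allI impI)
    fix aa b j assume "P (aa, b) + Q (aa, b) \<noteq> 0" "n \<le> j"
    then have "P (aa, b) \<noteq> 0 \<or> Q (aa, b) \<noteq> 0" by auto
    then show "aa j = 0 \<and> b j = 0" using a \<open>n \<le> j\<close> unfolding is_weyl_def by blast
  qed
  show ?thesis unfolding is_weyl_def using F I by blast
qed

lemma is_weyl_smul: "is_weyl n P \<Longrightarrow> is_weyl n (\<lambda>m. c * P m)"
  unfolding is_weyl_def by (auto intro: finite_subset[of _ "{m. P m \<noteq> 0}"])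

lemma is_weyl_lx: "is_weyl n P \<Longrightarrow> i < n \<Longrightarrow> is_weyl n (lmul_x i P)"
proof -
  assume a: "is_weyl n P" "i < n"
  have F: "finite {m. lmul_x i P m \<noteq> 0}" using lmul_x_reindex(1)[of P i] a by (simp add: is_weyl_def)
  have I: "\<forall>aa b. lmul_x i P (aa, b) \<noteq> 0 \<longrightarrow> (\<forall>j\<ge>n. aa j = 0 \<and> b j = 0)"
  proof (intro allI impI)
    fix aa b j assume "lmul_x i P (aa, b) \<noteq> 0" "n \<le> j"
    then have "P (aa(i := aa i - 1), b) \<noteq> 0"
      by (auto simp: lmul_x_def split: if_splits)
    then have "(aa(i := aa i - 1)) j = 0 \<and> b j = 0" using a \<open>n \<le> j\<close> unfolding is_weyl_def by blast
    then show "aa j = 0 \<and> b j = 0" using a \<open>n \<le> j\<close> by auto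
  qed
  show ?thesis unfolding is_weyl_def using F I by blast
qed

lemma is_weyl_ld: "is_weyl n P \<Longrightarrow> i < n \<Longrightarrow> is_weyl n (lmul_d i P)"
proof -
  assume a: "is_weyl n P" "i < n"
  have "{m. lmul_d i P m \<noteq> 0} \<subseteq> {m. Q1 i P m \<noteq> 0} \<union> {m. Q2 i P m \<noteq> 0}"
    by (auto simp: lmul_d_split)
  then have F: "finite {m. lmul_d i P m \<noteq> 0}"
    using Q1_reindex(1)[of P i] Q2_reindex(1)[of P i] a(1) finite_subset unfolding is_weyl_def by blast
  have I: "\<forall>aa b. lmul_d i P (aa, b) \<noteq> 0 \<longrightarrow> (\<forall>j\<ge>n. aa j = 0 \<and> b j = 0)"
  proof (intro allI impI)
    fix aa b j assume "lmul_d i P (aa, b) \<noteq> 0" "n \<le> j"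
    then have "P (aa, b(i := b i - 1)) \<noteq> 0 \<or> P (aa(i := aa i + 1), b) \<noteq> 0"
      by (auto simp: lmul_d_def split: if_splits)
    then have "(aa(i := aa i + 1)) j = 0 \<and> b j = 0 \<or> aa j = 0 \<and> (b(i := b i - 1)) j = 0"
      using a \<open>n \<le> j\<close> unfolding is_weyl_def by blast
    then show "aa j = 0 \<and> b j = 0"
      using a \<open>n \<le> j\<close> by (auto split: if_splits)
  qed
  show ?thesis unfolding is_weyl_def using F I by blast
qed




lemma mono_updS: "i < n \<Longrightarrow> mono n (a(i := Suc (a i))) z = z i * mono n a z"
  using mono_upd by simp

lemma act_zero: "act n (\<lambda>_. 0) g z = 0" by (simp add: act_def)

lemma act_add:
  assumes "is_weyl n P" "is_weyl n Q"
  shows "act n (\<lambda>m. P m + Q m) g z = act n P g z + act n Q g z"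
proof -
  let ?S = "{m. P m \<noteq> 0} \<union> {m. Q m \<noteq> 0}"
  have f: "finite ?S" using assms by (simp add: is_weyl_def)
  have "act n (\<lambda>m. P m + Q m) g z = (\<Sum>m\<in>?S. (P m + Q m) * mono n (fst m) z * dpow n (snd m) g z)"
    by (rule act_sup[OF f]) auto
  also have "\<dots> = (\<Sum>m\<in>?S. P m * mono n (fst m) z * dpow n (snd m) g z) + (\<Sum>m\<in>?S. Q m * mono n (fst m) z * dpow n (snd m) g z)"
    by (simp add: algebra_simps sum.distrib)
  also have "\<dots> = act n P g z + act n Q g z"
    by (simp add: act_sup[OF f, symmetric])
  finally show ?thesis .
qed

lemma act_smul:
  assumes "is_weyl n P"
  shows "act n (\<lambda>m. c * P m) g z = c * act n P g z"
proof -
  have f: "finite {m. P m \<noteq> 0}" using assms by (simp add: is_weyl_def)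
  have "act n (\<lambda>m. c * P m) g z = (\<Sum>m\<in>{m. P m \<noteq> 0}. (c * P m) * mono n (fst m) z * dpow n (snd m) g z)"
    by (rule act_sup[OF f]) auto
  also have "\<dots> = c * act n P g z"
    by (simp add: act_def sum_distrib_left algebra_simps)
  finally show ?thesis .
qed

lemma act_alt: "act n P g z = (\<Sum>m\<in>{m. P m \<noteq> 0}. P m * (mono n (fst m) z * dpow n (snd m) g z))"
  by (simp add: act_def mult.assoc)

lemma act_lx:
  assumes "is_weyl n P" "i < n"
  shows "act n (lmul_x i P) g z = z i * act n P g z"
proof -
  have f: "finite {m. P m \<noteq> 0}" using assms by (simp add: is_weyl_def)
  have "act n (lmul_x i P) g z = (\<Sum>m\<in>{m. P m \<noteq> 0}. 1 * P m * (mono n (fst (shx i m)) z * dpow n (snd (shx i m)) g z))"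
    unfolding act_alt by (rule lmul_x_reindex(2)[OF f])
  also have "\<dots> = (\<Sum>m\<in>{m. P m \<noteq> 0}. z i * (P m * (mono n (fst m) z * dpow n (snd m) g z)))"
    by (rule sum.cong) (auto simp: shx_def mono_updS[OF assms(2)] split: prod.splits)
  also have "\<dots> = z i * act n P g z" by (simp add: act_alt sum_distrib_left)
  finally show ?thesis .
qed

lemma act_ld:
  assumes "is_weyl n P"
  shows "act n (lmul_d i P) g z = (\<Sum>m\<in>{m. P m \<noteq> 0}. P m * (mono n (fst m) z * dpow n ((snd m)(i := snd m i + 1)) g z
       + of_nat (fst m i) * mono n ((fst m)(i := fst m i - 1)) z * dpow n (snd m) g z))"
proof -
  have f: "finite {m. P m \<noteq> 0}" using assms by (simp add: is_weyl_def)
  let ?T = "\<lambda>m. mono n (fst m) z * dpow n (snd m) g z"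
  let ?S = "{m. Q1 i P m \<noteq> 0} \<union> {m. Q2 i P m \<noteq> 0}"
  have fS: "finite ?S" using Q1_reindex(1)[OF f] Q2_reindex(1)[OF f] by simp
  have "act n (lmul_d i P) g z = (\<Sum>m\<in>?S. lmul_d i P m * ?T m)"
    unfolding mult.assoc[symmetric] by (rule act_sup[OF fS]) (auto simp: lmul_d_split)
  also have "\<dots> = (\<Sum>m\<in>?S. Q1 i P m * ?T m) + (\<Sum>m\<in>?S. Q2 i P m * ?T m)"
    by (simp add: lmul_d_split algebra_simps sum.distrib)
  also have "(\<Sum>m\<in>?S. Q1 i P m * ?T m) = (\<Sum>m\<in>{m. Q1 i P m \<noteq> 0}. Q1 i P m * ?T m)"
    by (rule sum.mono_neutral_right[OF fS]) auto
  also have "(\<Sum>m\<in>?S. Q2 i P m * ?T m) = (\<Sum>m\<in>{m. Q2 i P m \<noteq> 0}. Q2 i P m * ?T m)"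
    by (rule sum.mono_neutral_right[OF fS]) auto
  also note Q1_reindex(2)[OF f]
  also note Q2_reindex(2)[OF f]
  also have "(\<Sum>m\<in>{m. P m \<noteq> 0}. 1 * P m * ?T (shd i m)) + (\<Sum>m\<in>{m. P m \<noteq> 0}. of_nat (fst m i) * P m * ?T (shxm i m))
     = (\<Sum>m\<in>{m. P m \<noteq> 0}. P m * (mono n (fst m) z * dpow n ((snd m)(i := snd m i + 1)) g z
       + of_nat (fst m i) * mono n ((fst m)(i := fst m i - 1)) z * dpow n (snd m) g z))"
    unfolding sum.distrib[symmetric] by (rule sum.cong[OF refl]) (auto simp: algebra_simps shd_def shxm_def split: prod.splits)
  finally show ?thesis .
qed

lemma ginv_eq: "(\<lambda>z. inverse (peval n p z ^ l)) = ginv n p l" by (simp add: ginv_def)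

lemma Ann_iff: "P \<in> Ann_inv_pow n p l \<longleftrightarrow> is_weyl n P \<and> (\<forall>z. peval n p z \<noteq> 0 \<longrightarrow> act n P (ginv n p l) z = 0)"
  unfolding Ann_inv_pow_def ginv_eq by simp

lemma Ann_ld:
  assumes P: "P \<in> Ann_inv_pow n p l" and i: "i < n"
  shows "lmul_d i P \<in> Ann_inv_pow n p l"
  unfolding Ann_iff
proof (intro conjI allI impI)
  have W: "is_weyl n P" using P by (simp add: Ann_iff)
  then show "is_weyl n (lmul_d i P)" using i by (rule is_weyl_ld)
  fix z assume z: "peval n p z \<noteq> 0"
  let ?g = "ginv n p l"
  let ?S = "{m. P m \<noteq> 0}"
  define H where "H t = (\<Sum>m\<in>?S. P m * (mono n (fst m) (z(i:=t)) * dpow n (snd m) ?g (z(i:=t))))" for t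
  have D1: "(H has_field_derivative (\<Sum>m\<in>?S. P m * (of_nat (fst m i) * mono n ((fst m)(i := fst m i - 1)) z * dpow n (snd m) ?g (z(i:=z i))
      + dpow n ((snd m)(i := snd m i + 1)) ?g z * mono n (fst m) (z(i:=z i))))) (at (z i))"
    unfolding H_def
    by (intro DERIV_sum DERIV_cmult DERIV_mult mono_deriv[OF i] dpow_deriv[OF i z])
  have D0: "(H has_field_derivative 0) (at (z i))"
  proof (rule has_field_derivative_transform_within_open[OF DERIV_const line_open[OF i]])
    show "z i \<in> {t. peval n p (z(i := t)) \<noteq> 0}" using z by simp
    fix t assume "t \<in> {t. peval n p (z(i := t)) \<noteq> 0}"
    then have "act n P ?g (z(i:=t)) = 0" using P by (simp add: Ann_iff)
    then show "0 = H t" unfolding H_def act_alt by simp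
  qed
  have "(\<Sum>m\<in>?S. P m * (of_nat (fst m i) * mono n ((fst m)(i := fst m i - 1)) z * dpow n (snd m) ?g (z(i:=z i))
      + dpow n ((snd m)(i := snd m i + 1)) ?g z * mono n (fst m) (z(i:=z i)))) = 0"
    using DERIV_unique[OF D1 D0] .
  then show "act n (lmul_d i P) ?g z = 0"
    unfolding act_ld[OF W] fun_upd_triv by (simp add: algebra_simps)
qed

lemma Ann_lx:
  assumes P: "P \<in> Ann_inv_pow n p l" and i: "i < n"
  shows "lmul_x i P \<in> Ann_inv_pow n p l"
  using assms is_weyl_lx act_lx unfolding Ann_iff by simp

lemma Ann_add:
  assumes "P \<in> Ann_inv_pow n p l" "Q \<in> Ann_inv_pow n p l"
  shows "(\<lambda>m. P m + Q m) \<in> Ann_inv_pow n p l"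
  using assms is_weyl_add act_add unfolding Ann_iff by simp

lemma Ann_smul:
  assumes "P \<in> Ann_inv_pow n p l"
  shows "(\<lambda>m. c * P m) \<in> Ann_inv_pow n p l"
  using assms is_weyl_smul act_smul unfolding Ann_iff by simp

lemma Ann_zero: "(\<lambda>_. 0) \<in> Ann_inv_pow n p l"
  unfolding Ann_iff by (simp add: is_weyl_zero act_zero)

lemma left_ideal_Ann:
  assumes "S \<subseteq> Ann_inv_pow n p l"
  shows "left_ideal n S \<subseteq> Ann_inv_pow n p l"
proof
  fix P assume "P \<in> left_ideal n S"
  then show "P \<in> Ann_inv_pow n p l"
    by (induction rule: left_ideal.induct) (use assms in \<open>auto intro: Ann_ld Ann_lx Ann_add Ann_smul Ann_zero\<close>)
qed




lemma ipr_emb_upd: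
  assumes "i < n"
  shows "ipr n (emb (c(i := c i + 1))) w = ipr n (emb c) w + w i"
proof -
  have "ipr n (emb (c(i := c i + 1))) w = (\<Sum>j<n. emb c j * w j + (if j = i then w i else 0))"
    unfolding ipr_def by (rule sum.cong) (auto simp: emb_def algebra_simps)
  also have "\<dots> = ipr n (emb c) w + w i"
    using assms by (simp add: sum.distrib ipr_def)
  finally show ?thesis .
qed

lemma ipr_zero: "ipr n (emb zero_mi) w = 0" by (simp add: ipr_def emb_def zero_mi_def)

lemma ipr_emb_updS: "i < n \<Longrightarrow> ipr n (emb (c(i := Suc (c i)))) w = ipr n (emb c) w + w i"
  using ipr_emb_upd by simp

lemma ipr_unit: "i < n \<Longrightarrow> ipr n (emb (unit_mi i)) w = w i"
proof -
  assume i: "i < n"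
  have "unit_mi i = zero_mi(i := zero_mi i + 1)" by (simp add: unit_mi_def zero_mi_def)
  then show ?thesis using ipr_emb_upd[OF i, of zero_mi w] ipr_zero[of n w] by simp
qed

inductive Hom :: "nat \<Rightarrow> (nat \<Rightarrow> real) \<Rightarrow> real \<Rightarrow> ex \<Rightarrow> real \<Rightarrow> bool" for n w od where
  HCst: "c = 0 \<or> a = 0 \<Longrightarrow> Hom n w od (Cst c) a"
| HVar: "a = w i \<Longrightarrow> Hom n w od (Var i) a"
| HDf: "a = od - ipr n (emb c) w \<Longrightarrow> Hom n w od (Df c) a"
| HAd: "Hom n w od A a \<Longrightarrow> Hom n w od B a \<Longrightarrow> Hom n w od (Ad A B) a"
| HMu: "Hom n w od A a \<Longrightarrow> Hom n w od B b \<Longrightarrow> c = a + b \<Longrightarrow> Hom n w od (Mu A B) c"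

lemma Hom_dE:
  assumes "Hom n w od E a" "i < n"
  shows "Hom n w od (dE i E) (a - w i)"
  using assms(1)
proof (induction rule: Hom.induct)
  case (HCst c a)
  then show ?case by (simp add: Hom.HCst)
next
  case (HVar a j)
  then show ?case by (auto intro: Hom.HCst)
next
  case (HDf a c)
  then show ?case by (auto intro!: Hom.HDf simp: ipr_emb_updS[OF assms(2)])
next
  case (HAd A a B)
  then show ?case by (auto intro: Hom.HAd)
next
  case (HMu A a B b c)
  then show ?case by (auto intro!: Hom.HAd Hom.HMu)
qed

lemma Hom_step:
  assumes "Hom n w od E a" "i < n"
  shows "Hom n w od (step i k E) (a + od - w i)"
  unfolding step_def
proof (rule Hom.HAd)
  show "Hom n w od (Mu (dE i E) (Df zero_mi)) (a + od - w i)"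
    by (rule Hom.HMu[OF Hom_dE[OF assms] Hom.HDf]) (auto simp: ipr_zero)
  show "Hom n w od (Mu (Cst (- of_nat k)) (Mu E (Df (unit_mi i)))) (a + od - w i)"
    by (rule Hom.HMu[OF Hom.HCst Hom.HMu[OF assms(1) Hom.HDf]]) (auto simp: ipr_unit[OF assms(2)])
qed

lemma Hom_itS:
  assumes "Hom n w od E a" "i < n"
  shows "Hom n w od (itS i m k E) (a + real m * (od - w i))"
proof (induction m)
  case 0
  then show ?case using assms(1) by simp
next
  case (Suc m)
  from Hom_step[OF Suc assms(2), of "k + m"] show ?case by (simp add: algebra_simps)
qed

lemma Hom_Qd: "j \<le> n \<Longrightarrow> Hom n w od (Qd l j b) (\<Sum>i<j. real (b i) * (od - w i))"
proof (induction j)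
  case 0
  then show ?case by (simp add: Hom.HCst)
next
  case (Suc j)
  then have "j < n" by simp
  from Hom_itS[OF Suc.IH this, of "b j" "l + (\<Sum>i<j. b i)"] Suc.prems show ?case by (simp add: add.commute)
qed

definition sc :: "(nat \<Rightarrow> real) \<Rightarrow> real \<Rightarrow> (nat \<Rightarrow> complex) \<Rightarrow> nat \<Rightarrow> complex" where
  "sc w t z = (\<lambda>i. of_real (t powr w i) * z i)"

lemma ev_pos: "\<forall>\<^sub>F t in at_right (0::real). 0 < t"
  by (simp add: eventually_at_right_less)

lemma Hom_lim:
  assumes DfLim: "\<And>c. ((\<lambda>t. of_real (t powr (- (od - ipr n (emb c) w))) * dp n c f (sc w t z)) \<longlongrightarrow> dp n c q z) (at_right 0)"
  assumes "Hom n w od E a"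
  shows "((\<lambda>t. of_real (t powr (- a)) * evalE n f E (sc w t z)) \<longlongrightarrow> evalE n q E z) (at_right 0)"
  using assms(2)
proof (induction rule: Hom.induct)
  case (HCst c a)
  then show ?case
  proof
    assume "c = 0" then show ?thesis by simp
  next
    assume "a = 0"
    show ?thesis
      by (rule tendsto_eventually) (use ev_pos in \<open>eventually_elim, simp add: \<open>a = 0\<close>\<close>)
  qed
next
  case (HVar a i)
  have "\<forall>\<^sub>F t in at_right 0. of_real (t powr (- a)) * evalE n f (Var i) (sc w t z) = z i"
    using ev_pos
  proof eventually_elim
    case (elim t)
    have "of_real (t powr (- a)) * (of_real (t powr a) * z i) = of_real (t powr (- a) * t powr a) * z i"
      by simp
    also have "t powr (- a) * t powr a = 1" using elim by (simp add: powr_minus)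
    finally show ?case using HVar by (simp add: sc_def)
  qed
  then show ?case by (simp add: tendsto_eventually)
next
  case (HDf a c)
  then show ?case using DfLim[of c] by simp
next
  case (HAd A a B)
  then show ?case by (simp add: distrib_left tendsto_add)
next
  case (HMu A a B b c)
  have "\<forall>\<^sub>F t in at_right 0. (of_real (t powr (- a)) * evalE n f A (sc w t z)) * (of_real (t powr (- b)) * evalE n f B (sc w t z))
     = of_real (t powr (- c)) * evalE n f (Mu A B) (sc w t z)"
    using ev_pos
  proof eventually_elim
    case (elim t)
    have "t powr (- c) = t powr (- a) * t powr (- b)" using HMu(3) by (simp add: powr_add[symmetric])
    then show ?case by (simp add: algebra_simps)
  qed
  from tendsto_cong[OF this] tendsto_mult[OF HMu.IH] show ?case by simp
qed




lemma newton_mem: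
  assumes fin: "finite {g. f g \<noteq> 0}" and g: "f g \<noteq> 0"
  shows "emb g \<in> Newton f"
  unfolding Newton_def
proof (intro CollectI exI[of _ "\<lambda>g'. if g' = g then 1 else 0"] conjI)
  show "\<forall>g'\<in>{g. f g \<noteq> 0}. 0 \<le> (if g' = g then 1 else (0::real))" by simp
  show "(\<Sum>g'\<in>{g. f g \<noteq> 0}. if g' = g then 1 else (0::real)) = 1"
    using fin g by (simp add: sum.delta')
  have "(\<Sum>g'\<in>{g. f g \<noteq> 0}. (if g' = g then 1 else 0) * emb g' i) = emb g i" for i
  proof -
    have "(\<Sum>g'\<in>{g. f g \<noteq> 0}. (if g' = g then 1 else 0) * emb g' i) = (\<Sum>g'\<in>{g. f g \<noteq> 0}. if g' = g then emb g' i else 0)"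
      by (rule sum.cong) auto
    also have "\<dots> = emb g i" using fin g by (simp add: sum.delta')
    finally show ?thesis .
  qed
  then show "emb g = (\<lambda>i. \<Sum>g'\<in>{g. f g \<noteq> 0}. (if g' = g then 1 else 0) * emb g' i)"
    by (simp add: fun_eq_iff)
qed

lemma newton_bdd:
  assumes fin: "finite {g. f g \<noteq> 0}"
  shows "bdd_below ((\<lambda>u. ipr n u w) ` Newton f)"
proof -
  define B where "B = (\<Sum>g'\<in>{g. f g \<noteq> 0}. \<bar>ipr n (emb g') w\<bar>)"
  show ?thesis
  proof (rule bdd_belowI2[of _ "- B"])
    fix u assume "u \<in> Newton f"
    then obtain c where c: "\<forall>g\<in>{g. f g \<noteq> 0}. c g \<ge> 0" "(\<Sum>g\<in>{g. f g \<noteq> 0}. c g) = 1"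
      "u = (\<lambda>i. \<Sum>g\<in>{g. f g \<noteq> 0}. c g * emb g i)" unfolding Newton_def by blast
    have "ipr n u w = (\<Sum>i<n. \<Sum>g\<in>{g. f g \<noteq> 0}. c g * emb g i * w i)"
      unfolding ipr_def c(3) by (simp add: sum_distrib_right)
    also have "\<dots> = (\<Sum>g\<in>{g. f g \<noteq> 0}. c g * ipr n (emb g) w)"
      unfolding ipr_def by (subst sum.swap) (simp add: sum_distrib_left mult.assoc)
    also have "\<dots> \<ge> (\<Sum>g\<in>{g. f g \<noteq> 0}. c g * (- B))"
    proof (rule sum_mono)
      fix g assume g: "g \<in> {g. f g \<noteq> 0}"
      have "\<bar>ipr n (emb g) w\<bar> \<le> B" unfolding B_def
        by (rule member_le_sum[OF g _ fin]) simp
      then have "- B \<le> ipr n (emb g) w" by simp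
      moreover have "c g \<ge> 0" using c(1) g by blast
      ultimately show "c g * (- B) \<le> c g * ipr n (emb g) w" by (rule mult_left_mono)
    qed
    also have "(\<Sum>g\<in>{g. f g \<noteq> 0}. c g * (- B)) = - B"
      using c(2) by (simp add: sum_distrib_right[symmetric] sum_negf)
    finally show "- B \<le> ipr n u w" .
  qed
qed

lemma newton_lower:
  assumes fin: "finite {g. f g \<noteq> 0}" and g: "f g \<noteq> 0"
  shows "ordf n f w \<le> ipr n (emb g) w"
  unfolding ordf_def by (rule cInf_lower[OF imageI[OF newton_mem[OF fin g]] newton_bdd[OF fin]])

lemma face_iff:
  assumes fin: "finite {g. f g \<noteq> 0}" and g: "f g \<noteq> 0"
  shows "emb g \<in> face n f w \<longleftrightarrow> ipr n (emb g) w = ordf n f w"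
  unfolding face_def using newton_mem[OF fin g] by simp

lemma powr_lim:
  assumes "e \<ge> 0"
  shows "((\<lambda>t. of_real (t powr e) :: complex) \<longlongrightarrow> (if e = 0 then 1 else 0)) (at_right 0)"
proof (cases "e = 0")
  case True
  show ?thesis
    by (rule tendsto_eventually) (use ev_pos in \<open>eventually_elim, simp add: True\<close>)
next
  case False
  then have e: "e > 0" using assms by simp
  have "((\<lambda>t::real. t powr e) \<longlongrightarrow> 0 powr e) (at_right 0)"
    by (rule tendsto_powr2[OF tendsto_ident_at tendsto_const _ e])
       (use ev_pos in \<open>eventually_elim, simp\<close>)
  then have "((\<lambda>t::real. of_real (t powr e) :: complex) \<longlongrightarrow> of_real 0) (at_right 0)"
    by (intro tendsto_of_real) simp
  then show ?thesis using False by simp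
qed

lemma prod_scale:
  assumes t: "t > 0"
  shows "(\<Prod>i<n. of_nat (ffc (g i) (c i)) * sc w t z i ^ (g i - c i)) =
     of_real (t powr (ipr n (emb g) w - ipr n (emb c) w)) * (\<Prod>i<n. of_nat (ffc (g i) (c i)) * z i ^ (g i - c i))"
proof (cases "\<forall>i<n. c i \<le> g i")
  case True
  have fac: "of_nat (ffc (g i) (c i)) * sc w t z i ^ (g i - c i) =
      of_real (t powr (real (g i - c i) * w i)) * (of_nat (ffc (g i) (c i)) * z i ^ (g i - c i))" for i
  proof -
    have "(t powr w i) ^ (g i - c i) = t powr (real (g i - c i) * w i)"
      using t by (simp add: powr_power)
    then show ?thesis
      unfolding sc_def power_mult_distrib of_real_power[symmetric] by simp
  qed
  have ex: "(\<Sum>i<n. real (g i - c i) * w i) = ipr n (emb g) w - ipr n (emb c) w"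
    unfolding ipr_def emb_def sum_subtractf[symmetric]
    by (rule sum.cong) (use True in \<open>auto simp: of_nat_diff left_diff_distrib\<close>)
  have "(\<Prod>i<n. of_nat (ffc (g i) (c i)) * sc w t z i ^ (g i - c i)) =
     (\<Prod>i<n. of_real (t powr (real (g i - c i) * w i))) * (\<Prod>i<n. of_nat (ffc (g i) (c i)) * z i ^ (g i - c i))"
    unfolding fac by (rule prod.distrib)
  also have "(\<Prod>i<n. of_real (t powr (real (g i - c i) * w i)) :: complex) = of_real (t powr (\<Sum>i<n. real (g i - c i) * w i))"
    using t by (simp add: powr_sum of_real_prod)
  finally show ?thesis unfolding ex .
next
  case False
  then obtain i where i: "i < n" "g i < c i" by (auto simp: not_le)
  then have z: "ffc (g i) (c i) = 0" by (simp add: ffc_zero)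
  have A: "(\<Prod>i<n. of_nat (ffc (g i) (c i)) * sc w t z i ^ (g i - c i)) = (0::complex)"
    by (rule prod_zero) (use i z in auto)
  have B: "(\<Prod>i<n. of_nat (ffc (g i) (c i)) * z i ^ (g i - c i)) = (0::complex)"
    by (rule prod_zero) (use i z in auto)
  show ?thesis unfolding A B by simp
qed

lemma dp_lim:
  fixes f :: cpoly and n :: nat and w :: "nat \<Rightarrow> real" and c :: mindex and z :: "nat \<Rightarrow> complex"
  assumes fin: "finite {g. f g \<noteq> 0}"
  defines "od \<equiv> ordf n f w" and "q \<equiv> face_poly f (face n f w)"
  shows "((\<lambda>t. of_real (t powr (- (od - ipr n (emb c) w))) * dp n c f (sc w t z)) \<longlongrightarrow> dp n c q z) (at_right 0)"
proof -
  define X where "X g = f g * (\<Prod>i<n. of_nat (ffc (g i) (c i)) * z i ^ (g i - c i))" for g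
  define e where "e g = ipr n (emb g) w - od" for g
  have ev: "\<forall>\<^sub>F t in at_right 0. (\<Sum>g\<in>{g. f g \<noteq> 0}. of_real (t powr e g) * X g) =
       of_real (t powr (- (od - ipr n (emb c) w))) * dp n c f (sc w t z)"
    using ev_pos
  proof eventually_elim
    case (elim t)
    have "of_real (t powr (- (od - ipr n (emb c) w))) * dp n c f (sc w t z) =
       (\<Sum>g\<in>{g. f g \<noteq> 0}. of_real (t powr (- (od - ipr n (emb c) w))) * (f g *
          (of_real (t powr (ipr n (emb g) w - ipr n (emb c) w)) * (\<Prod>i<n. of_nat (ffc (g i) (c i)) * z i ^ (g i - c i)))))"
      unfolding dp_def sum_distrib_left prod_scale[OF elim] ..
    also have "\<dots> = (\<Sum>g\<in>{g. f g \<noteq> 0}. of_real (t powr e g) * X g)"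
    proof (rule sum.cong[OF refl])
      fix g
      have "t powr (- (od - ipr n (emb c) w)) * t powr (ipr n (emb g) w - ipr n (emb c) w) = t powr e g"
        unfolding e_def powr_add[symmetric] by (simp add: algebra_simps)
      then have "(of_real (t powr (- (od - ipr n (emb c) w))) :: complex) * of_real (t powr (ipr n (emb g) w - ipr n (emb c) w)) = of_real (t powr e g)"
        by (simp only: of_real_mult[symmetric])
      then show "of_real (t powr (- (od - ipr n (emb c) w))) * (f g *
          (of_real (t powr (ipr n (emb g) w - ipr n (emb c) w)) * (\<Prod>i<n. of_nat (ffc (g i) (c i)) * z i ^ (g i - c i))))
          = of_real (t powr e g) * X g"
        unfolding X_def by (simp add: algebra_simps)
    qed
    finally show ?case by simp
  qed
  have lim: "((\<lambda>t. \<Sum>g\<in>{g. f g \<noteq> 0}. of_real (t powr e g) * X g) \<longlongrightarrow>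
      (\<Sum>g\<in>{g. f g \<noteq> 0}. (if e g = 0 then 1 else 0) * X g)) (at_right 0)"
  proof (intro tendsto_sum tendsto_mult tendsto_const)
    fix g assume "g \<in> {g. f g \<noteq> 0}"
    then have "e g \<ge> 0" unfolding e_def od_def using newton_lower[OF fin] by simp
    then show "((\<lambda>t. of_real (t powr e g) :: complex) \<longlongrightarrow> (if e g = 0 then 1 else 0)) (at_right 0)"
      by (rule powr_lim)
  qed
  have val: "(\<Sum>g\<in>{g. f g \<noteq> 0}. (if e g = 0 then 1 else 0) * X g) = dp n c q z"
  proof -
    have "(\<Sum>g\<in>{g. f g \<noteq> 0}. (if e g = 0 then 1 else 0) * X g) =
        (\<Sum>g\<in>{g. f g \<noteq> 0}. q g * (\<Prod>i<n. of_nat (ffc (g i) (c i)) * z i ^ (g i - c i)))"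
    proof (rule sum.cong[OF refl])
      fix g assume g: "g \<in> {g. f g \<noteq> 0}"
      have "emb g \<in> face n f w \<longleftrightarrow> e g = 0" unfolding e_def od_def using face_iff[OF fin] g by simp
      then show "(if e g = 0 then 1 else 0) * X g = q g * (\<Prod>i<n. of_nat (ffc (g i) (c i)) * z i ^ (g i - c i))"
        unfolding X_def q_def face_poly_def by simp
    qed
    also have "\<dots> = dp n c q z"
      unfolding dp_def by (rule sum.mono_neutral_right) (use fin in \<open>auto simp: q_def face_poly_def split: if_splits\<close>)
    finally show ?thesis .
  qed
  show ?thesis using tendsto_cong[OF ev] lim val by simp
qed




lemma mono_scale:
  assumes "t > 0"
  shows "mono n a (sc w t z) = of_real (t powr ipr n (emb a) w) * mono n a z"
  using prod_scale[OF assms, where n=n and g=a and c=zero_mi and w=w and z=z]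
  by (simp add: mono_def zero_mi_def ipr_zero[unfolded zero_mi_def])

lemma initial_weyl:
  assumes "is_weyl n P"
  shows "is_weyl n (initial n w P)"
proof -
  have sub: "{m. initial n w P m \<noteq> 0} \<subseteq> {m. P m \<noteq> 0}" by (auto simp: initial_def split: if_splits)
  have F: "finite {m. initial n w P m \<noteq> 0}"
    using finite_subset[OF sub] assms by (simp add: is_weyl_def)
  have I: "\<forall>a b. initial n w P (a, b) \<noteq> 0 \<longrightarrow> (\<forall>i\<ge>n. a i = 0 \<and> b i = 0)"
    using sub assms unfolding is_weyl_def by blast
  show ?thesis unfolding is_weyl_def using F I by blast
qed

lemma wt_eq: "wt n w (a, b) = ipr n (emb b) w - ipr n (emb a) w"
  unfolding wt_def ipr_def emb_def by (simp add: sum_subtractf[symmetric] algebra_simps)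

lemma mainB:
  fixes n l :: nat and f :: cpoly and w :: "nat \<Rightarrow> real"
  assumes fp: "is_poly n f" and P: "P \<in> Ann_inv_pow n f l" and P0: "P \<noteq> (\<lambda>_. 0)"
  shows "initial n w P \<in> Ann_inv_pow n (face_poly f (face n f w)) l"
proof -
  define q where "q = face_poly f (face n f w)"
  define od where "od = ordf n f w"
  have finf: "finite {g. f g \<noteq> 0}" using fp by (simp add: is_poly_def)
  have W: "is_weyl n P" using P by (simp add: Ann_iff)
  define S where "S = {m. P m \<noteq> 0}"
  have finS: "finite S" using W by (simp add: is_weyl_def S_def)
  have neS: "S \<noteq> {}" using P0 by (auto simp: S_def)
  define M where "M = Max (wt n w ` S)"
  have Mge: "wt n w m \<le> M" if "m \<in> S" for m unfolding M_def using finS that by simp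
  have init: "initial n w P m = (if m \<in> S \<and> wt n w m = M then P m else 0)" for m
    by (simp add: initial_def S_def M_def)
  define K where "K b = l + (\<Sum>i<n. b i)" for b :: mindex
  define cb where "cb b = (\<Sum>i<n. real (b i) * (od - w i))" for b :: mindex
  have Repf: "Rep n f (dpow n b (ginv n f l)) (Qd l n b) (K b)" for b
    unfolding K_def by (rule Rep_dpow) simp
  have Repq: "Rep n q (dpow n b (ginv n q l)) (Qd l n b) (K b)" for b
    unfolding K_def by (rule Rep_dpow) simp
  have DfLim: "((\<lambda>t. of_real (t powr (- (od - ipr n (emb c) w))) * dp n c f (sc w t z)) \<longlongrightarrow> dp n c q z) (at_right 0)" for c z
    unfolding od_def q_def by (rule dp_lim[OF finf])
  have Elim: "((\<lambda>t. of_real (t powr (- cb b)) * evalE n f (Qd l n b) (sc w t z)) \<longlongrightarrow> evalE n q (Qd l n b) z) (at_right 0)" for b z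
    unfolding cb_def by (rule Hom_lim[OF DfLim Hom_Qd]) simp
  have Flim: "((\<lambda>t. of_real (t powr (- od)) * peval n f (sc w t z)) \<longlongrightarrow> peval n q z) (at_right 0)" for z
    using Hom_lim[OF DfLim Hom.HDf[of od od n "zero_mi" w], of z] unfolding peval_evalE by (simp add: ipr_zero)
  show ?thesis
    unfolding Ann_iff q_def[symmetric]
  proof (intro conjI allI impI)
    show "is_weyl n (initial n w P)" by (rule initial_weyl[OF W])
    fix z assume qz: "peval n q z \<noteq> 0"
    have evF: "\<forall>\<^sub>F t in at_right 0. of_real (t powr (- od)) * peval n f (sc w t z) \<noteq> 0"
      by (rule tendsto_imp_eventually_ne[OF Flim qz])
    define T where "T m t = of_real (t powr (real l * od + M)) * (P m * mono n (fst m) (sc w t z) *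
        dpow n (snd m) (ginv n f l) (sc w t z))" for m t
    define L where "L m = (if wt n w m = M then 1 else 0) * (P m * mono n (fst m) z *
        (evalE n q (Qd l n (snd m)) z * inverse (peval n q z) ^ K (snd m)))" for m
    have ev0: "\<forall>\<^sub>F t in at_right 0. (\<Sum>m\<in>S. T m t) = 0"
      using evF ev_pos
    proof eventually_elim
      case (elim t)
      then have "peval n f (sc w t z) \<noteq> 0" by simp
      then have "act n P (ginv n f l) (sc w t z) = 0" using P by (simp add: Ann_iff)
      then show ?case unfolding T_def sum_distrib_left[symmetric] by (simp add: act_def S_def)
    qed
    have limT: "((\<lambda>t. T m t) \<longlongrightarrow> L m) (at_right 0)" if m: "m \<in> S" for m
    proof -
      obtain a b where ab: "m = (a, b)" by (cases m)
      define G where "G t = of_real (t powr (M - wt n w m)) * (P m * mono n a z) *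
          ((of_real (t powr (- cb b)) * evalE n f (Qd l n b) (sc w t z)) *
           inverse (of_real (t powr (- od)) * peval n f (sc w t z)) ^ K b)" for t
      have evG: "\<forall>\<^sub>F t in at_right 0. G t = T m t"
        using evF ev_pos
      proof eventually_elim
        case (elim t)
        then have Fz: "peval n f (sc w t z) \<noteq> 0" by simp
        have dp: "dpow n b (ginv n f l) (sc w t z) = evalE n f (Qd l n b) (sc w t z) * inverse (peval n f (sc w t z)) ^ K b"
          using Repf[of b] Fz unfolding Rep_def by blast
        have ex: "real l * od + M + ipr n (emb a) w = (M - wt n w m) + (- cb b) + od * real (K b)"
          unfolding ab wt_eq cb_def K_def ipr_def emb_def
          by (simp add: algebra_simps sum.distrib sum_subtractf sum_distrib_left sum_distrib_right)
        have "(of_real (t powr (real l * od + M)) :: complex) * of_real (t powr ipr n (emb a) w) =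
            of_real (t powr (M - wt n w m)) * of_real (t powr (- cb b)) * inverse (of_real (t powr (- od))) ^ K b"
        proof -
          have "t powr (real l * od + M) * t powr ipr n (emb a) w = t powr (M - wt n w m) * t powr (- cb b) * t powr (od * real (K b))"
            unfolding powr_add[symmetric] ex ..
          also have "t powr (od * real (K b)) = inverse (t powr (- od)) ^ K b"
            using elim(2) by (simp add: powr_minus powr_power mult.commute)
          finally show ?thesis
            by (simp only: of_real_mult[symmetric] of_real_inverse[symmetric] of_real_power[symmetric])
        qed
        then show ?case
          unfolding G_def T_def ab fst_conv snd_conv dp mono_scale[OF elim(2)] power_mult_distrib inverse_mult_distrib
          by (simp add: algebra_simps)
      qed
      have lim1: "((\<lambda>t. of_real (t powr (M - wt n w m)) :: complex) \<longlongrightarrow> (if M - wt n w m = 0 then 1 else 0)) (at_right 0)"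
        by (rule powr_lim) (use Mge[OF m] in simp)
      have "((\<lambda>t. G t) \<longlongrightarrow> (if M - wt n w m = 0 then 1 else 0) * (P m * mono n a z) *
          (evalE n q (Qd l n b) z * inverse (peval n q z) ^ K b)) (at_right 0)"
        unfolding G_def
        by (intro tendsto_mult lim1 tendsto_const Elim tendsto_power tendsto_inverse Flim qz)
      moreover have "(if M - wt n w m = 0 then 1 else 0) * (P m * mono n a z) *
          (evalE n q (Qd l n b) z * inverse (peval n q z) ^ K b) = L m"
        unfolding L_def ab by simp
      ultimately show ?thesis using tendsto_cong[OF evG] by simp
    qed
    have "((\<lambda>t. \<Sum>m\<in>S. T m t) \<longlongrightarrow> (\<Sum>m\<in>S. L m)) (at_right 0)"
      by (rule tendsto_sum) (rule limT)
    moreover have "((\<lambda>t. \<Sum>m\<in>S. T m t) \<longlongrightarrow> 0) (at_right 0)"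
      using tendsto_cong[OF ev0] by simp
    ultimately have L0: "(\<Sum>m\<in>S. L m) = 0"
      using tendsto_unique by (metis trivial_limit_at_right_real)
    have "act n (initial n w P) (ginv n q l) z = (\<Sum>m\<in>S. initial n w P m * mono n (fst m) z * dpow n (snd m) (ginv n q l) z)"
      by (rule act_sup[OF finS]) (auto simp: init split: if_splits)
    also have "\<dots> = (\<Sum>m\<in>S. L m)"
    proof (rule sum.cong[OF refl])
      fix m assume "m \<in> S"
      moreover have "dpow n (snd m) (ginv n q l) z = evalE n q (Qd l n (snd m)) z * inverse (peval n q z) ^ K (snd m)"
        using Repq[of "snd m"] qz unfolding Rep_def by blast
      ultimately show "initial n w P m * mono n (fst m) z * dpow n (snd m) (ginv n q l) z = L m"
        unfolding init L_def by simp
    qed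
    finally show "act n (initial n w P) (ginv n q l) z = 0" using L0 by simp
  qed
qed

theorem mainTheorem6:
  fixes n l :: nat and f :: cpoly and w :: "nat \<Rightarrow> real"
  assumes "is_poly n f" and "f \<noteq> (\<lambda>_. 0)" and "\<exists>i<n. w i \<noteq> 0"
  shows "initial_ideal n w (Ann_inv_pow n f l) \<subseteq> Ann_inv_pow n (face_poly f (face n f w)) l"
  unfolding initial_ideal_def
  by (rule left_ideal_Ann) (use mainB[OF assms(1)] in blast)


end
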